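(* If $\zeta$ is a holomorphic function on the unit disk $B_1\subset\mathbb{R}^2$ and $h\in W^{1,2}_0(B_1)$, then $$\int_{B_1}h^2|\zeta|^2\le8\left(\int_{B_1}|\nabla h|^2\right)\left(\int_{B_1}|\zeta|^2\right).$$ *)

theory Defs
  imports "HOL-Analysis.Analysis"
begin

text \<open>We identify \<open>\<real>\<^sup>2\<close> with the type \<open>complex\<close> (a Euclidean space of dimension 2).\<close>

definition test_fun_disk :: "(complex \<Rightarrow> real) \<Rightarrow> (complex \<Rightarrow> complex) \<Rightarrow> bool" where
  "test_fun_disk \<phi> D \<longleftrightarrow>
     (\<forall>x. (\<phi> has_derivative (\<lambda>v. D x \<bullet> v)) (at x)) \<and>
     continuous_on UNIV D \<and>
     compact (closure {x. \<phi> x \<noteq> 0}) \<and>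
     closure {x. \<phi> x \<noteq> 0} \<subseteq> ball 0 1"

text \<open>\<open>W12_0_disk h g\<close>: the function \<open>h\<close> belongs to \<open>W\<^sup>1\<^sup>,\<^sup>2\<^sub>0(B\<^sub>1)\<close> (the closure of
  compactly supported C^1 functions in the \<open>W\<^sup>1\<^sup>,\<^sup>2\<close> norm) and \<open>g\<close> is its weak
  gradient, i.e. the \<open>L\<^sup>2\<close>-limit of the gradients of the approximating functions.\<close>

definition W12_0_disk :: "(complex \<Rightarrow> real) \<Rightarrow> (complex \<Rightarrow> complex) \<Rightarrow> bool" where
  "W12_0_disk h g \<longleftrightarrow>
     h \<in> borel_measurable lebesgue \<and> g \<in> borel_measurable lebesgue \<and>
     (\<exists>\<phi> D. (\<forall>k. test_fun_disk (\<phi> k) (D k)) \<and>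
        (\<lambda>k. \<integral>\<^sup>+x\<in>ball 0 1. ennreal ((\<phi> k x - h x)\<^sup>2) \<partial>lebesgue) \<longlonglongrightarrow> 0 \<and>
        (\<lambda>k. \<integral>\<^sup>+x\<in>ball 0 1. ennreal ((norm (D k x - g x))\<^sup>2) \<partial>lebesgue) \<longlonglongrightarrow> 0)"

end

theory Submission
  imports Defs "HOL-Complex_Analysis.Complex_Analysis"
begin

lemma lborel_complex_distr:
  "distr (lborel \<Otimes>\<^sub>M lborel) borel (\<lambda>(x,y). Complex x y) = (lborel :: complex measure)"
proof (rule lborel_eqI[symmetric])
  fix l u :: complex
  assume lu: "\<And>b. b \<in> Basis \<Longrightarrow> l \<bullet> b \<le> u \<bullet> b"
  have m: "(\<lambda>(x,y). Complex x y) \<in> measurable (lborel \<Otimes>\<^sub>M lborel) borel"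
    unfolding Complex_eq case_prod_beta by measurable
  have pre: "(\<lambda>(x,y). Complex x y) -` box l u \<inter> space (lborel \<Otimes>\<^sub>M lborel)
        = box (Re l) (Re u) \<times> box (Im l) (Im u)"
    by (auto simp: mem_box Basis_complex_def space_pair_measure)
  show "emeasure (distr (lborel \<Otimes>\<^sub>M lborel) borel (\<lambda>(x,y). Complex x y)) (box l u)
        = (\<Prod>b\<in>Basis. (u - l) \<bullet> b)"
    using lu[of 1] lu[of \<i>]
    by (simp add: emeasure_distr[OF m] pre lborel.emeasure_pair_measure_Times Basis_complex_def
         ennreal_mult[symmetric] inner_complex_def)
qed simp

lemma complex_fubini:
  fixes f :: "complex \<Rightarrow> 'b::{banach,second_countable_topology}"
  assumes f: "integrable lborel f"
  shows "integral\<^sup>L lborel f = (\<integral>y. (\<integral>x. f (Complex x y) \<partial>lborel) \<partial>lborel)"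
    and "integral\<^sup>L lborel f = (\<integral>x. (\<integral>y. f (Complex x y) \<partial>lborel) \<partial>lborel)"
proof -
  have m: "(\<lambda>(x,y). Complex x y) \<in> measurable (lborel \<Otimes>\<^sub>M lborel) borel"
    unfolding Complex_eq case_prod_beta by measurable
  have fm: "f \<in> borel_measurable borel"
    using f by (simp add: borel_measurable_integrable)
  have eq: "integral\<^sup>L lborel f = integral\<^sup>L (lborel \<Otimes>\<^sub>M lborel) (\<lambda>(x,y). f (Complex x y))"
    using integral_distr[OF m fm] lborel_complex_distr by (simp add: split_beta')
  have i: "integrable (lborel \<Otimes>\<^sub>M lborel) (\<lambda>(x,y). f (Complex x y))"
    using f integrable_distr_eq[OF m fm] lborel_complex_distr by (simp add: split_beta')
  show "integral\<^sup>L lborel f = (\<integral>y. (\<integral>x. f (Complex x y) \<partial>lborel) \<partial>lborel)"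
    using lborel_pair.integral_snd[of "\<lambda>x y. f (Complex x y)"] i eq by simp
  show "integral\<^sup>L lborel f = (\<integral>x. (\<integral>y. f (Complex x y) \<partial>lborel) \<partial>lborel)"
    using lborel_pair.integral_fst[of "\<lambda>x y. f (Complex x y)"] i eq by simp
qed

lemma deriv_zero_on_open:
  assumes "(F has_derivative F') (at z)" "open S" "z \<in> S" "\<And>x. x \<in> S \<Longrightarrow> F x = 0"
  shows "F' = (\<lambda>v. 0)"
proof -
  have "((\<lambda>x. 0) has_derivative (\<lambda>v. 0)) (at z)" by simp
  then have "(F has_derivative (\<lambda>v. 0)) (at z)"
    by (rule has_derivative_transform_within_open[OF _ assms(2,3)]) (use assms(4) in auto)
  then show ?thesis using has_derivative_unique assms(1) by blast
qed

lemma line_x_deriv: "((\<lambda>t. Complex t y) has_derivative (\<lambda>h. h *\<^sub>R 1)) (at t within S)"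
proof -
  have e: "(\<lambda>t. Complex t y) = (\<lambda>t. t *\<^sub>R 1 + Complex 0 y)"
    by (rule ext) (simp add: complex_eq_iff)
  have d: "((\<lambda>t. t *\<^sub>R 1 + Complex 0 y) has_derivative (\<lambda>h. h *\<^sub>R 1)) (at t within S)"
    by (rule has_derivative_add_const, rule bounded_linear_imp_has_derivative[OF bounded_linear_scaleR_left])
  show ?thesis using d by (simp only: e[symmetric])
qed

lemma line_y_deriv: "((\<lambda>t. Complex x t) has_derivative (\<lambda>h. h *\<^sub>R \<i>)) (at t within S)"
proof -
  have e: "(\<lambda>t. Complex x t) = (\<lambda>t. t *\<^sub>R \<i> + Complex x 0)"
    by (rule ext) (simp add: complex_eq_iff)
  have d: "((\<lambda>t. t *\<^sub>R \<i> + Complex x 0) has_derivative (\<lambda>h. h *\<^sub>R \<i>)) (at t within S)"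
    by (rule has_derivative_add_const, rule bounded_linear_imp_has_derivative[OF bounded_linear_scaleR_left])
  show ?thesis using d by (simp only: e[symmetric])
qed

lemma div_zero:
  fixes F :: "complex \<Rightarrow> complex" and F' :: "complex \<Rightarrow> complex \<Rightarrow> complex"
  assumes der: "\<And>z. (F has_derivative F' z) (at z)"
    and c1: "continuous_on UNIV (\<lambda>z. F' z 1)" and ci: "continuous_on UNIV (\<lambda>z. F' z \<i>)"
    and supp: "\<And>z. R \<le> cmod z \<Longrightarrow> F z = 0"
  shows "integral\<^sup>L lborel (\<lambda>z. F' z 1) = 0" and "integral\<^sup>L lborel (\<lambda>z. F' z \<i>) = 0"
proof -
  have R0: "0 \<le> R \<or> (\<forall>z. F z = 0)" using supp by (metis norm_ge_zero order_trans linear)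
  have Fz: "F' z = (\<lambda>v. 0)" if "R < cmod z" for z
    by (rule deriv_zero_on_open[OF der, of "{z. R < cmod z}"])
       (use that supp in \<open>auto intro: open_Collect_less continuous_intros\<close>)
  have outside: "F' z v = 0" if "z \<notin> cball 0 R" for z v
    using Fz[of z] that by auto
  have lin: "F' z (h *\<^sub>R v) = h *\<^sub>R F' z v" for z h v
    using has_derivative_linear[OF der[of z]] by (simp add: linear_scale)
  have integ: "integrable lborel (\<lambda>z. F' z v)" if "continuous_on UNIV (\<lambda>z. F' z v)" for v
  proof -
    have "integrable lborel (\<lambda>z. indicator (cball 0 R) z *\<^sub>R F' z v)"
      by (rule borel_integrable_compact) (use that in \<open>auto intro: continuous_on_subset\<close>)
    moreover have "(\<lambda>z. indicator (cball 0 R) z *\<^sub>R F' z v) = (\<lambda>z. F' z v)"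
      using outside by (auto simp: indicator_def fun_eq_iff)
    ultimately show ?thesis by simp
  qed
  show "integral\<^sup>L lborel (\<lambda>z. F' z 1) = 0"
  proof -
    have inner: "(\<integral>x. F' (Complex x y) 1 \<partial>lborel) = 0" for y
    proof (cases "0 \<le> R")
      case True
      have "(\<integral>x. F' (Complex x y) 1 \<partial>lborel) = (\<integral>x. indicator {-R..R} x *\<^sub>R F' (Complex x y) 1 \<partial>lborel)"
      proof (rule Bochner_Integration.integral_cong)
        fix x
        show "F' (Complex x y) 1 = indicator {-R..R} x *\<^sub>R F' (Complex x y) 1"
        proof (cases "\<bar>x\<bar> \<le> R")
          case False
          then have "R < cmod (Complex x y)" using abs_Re_le_cmod[of "Complex x y"] by simp
          then show ?thesis using outside[of "Complex x y" 1] False by (simp add: indicator_def)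
        qed (auto simp: indicator_def)
      qed simp
      also have "\<dots> = F (Complex R y) - F (Complex (-R) y)"
      proof (rule integral_FTC_atLeastAtMost)
        show "-R \<le> R" using True by simp
        fix x assume "-R \<le> x" "x \<le> R"
        have "((F \<circ> (\<lambda>t. Complex t y)) has_derivative (F' (Complex x y) \<circ> (\<lambda>h. h *\<^sub>R 1))) (at x within {-R..R})"
          by (rule diff_chain_within[OF line_x_deriv]) (rule has_derivative_at_withinI[OF der])
        then show "((\<lambda>t. F (Complex t y)) has_vector_derivative F' (Complex x y) 1) (at x within {-R..R})"
          by (simp add: has_vector_derivative_def o_def lin)
      next
        show "continuous_on {-R..R} (\<lambda>x. F' (Complex x y) 1)"
          by (rule continuous_on_compose2[OF c1, of _ "\<lambda>x. Complex x y"]) (auto simp: Complex_eq intro!: continuous_intros)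
      qed
      also have "\<dots> = 0"
        using supp[of "Complex R y"] supp[of "Complex (-R) y"] True
          abs_Re_le_cmod[of "Complex R y"] abs_Re_le_cmod[of "Complex (-R) y"] by simp
      finally show ?thesis .
    next
      case False
      then have "\<forall>z. F z = 0" using R0 by auto
      then have "F' z = (\<lambda>v. 0)" for z using deriv_zero_on_open[OF der, of UNIV] by auto
      then show ?thesis by simp
    qed
    show ?thesis using complex_fubini(1)[OF integ[OF c1]] inner by simp
  qed
  show "integral\<^sup>L lborel (\<lambda>z. F' z \<i>) = 0"
  proof -
    have inner: "(\<integral>y. F' (Complex x y) \<i> \<partial>lborel) = 0" for x
    proof (cases "0 \<le> R")
      case True
      have "(\<integral>y. F' (Complex x y) \<i> \<partial>lborel) = (\<integral>y. indicator {-R..R} y *\<^sub>R F' (Complex x y) \<i> \<partial>lborel)"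
      proof (rule Bochner_Integration.integral_cong)
        fix y
        show "F' (Complex x y) \<i> = indicator {-R..R} y *\<^sub>R F' (Complex x y) \<i>"
        proof (cases "\<bar>y\<bar> \<le> R")
          case False
          then have "R < cmod (Complex x y)" using abs_Im_le_cmod[of "Complex x y"] by simp
          then show ?thesis using outside[of "Complex x y" \<i>] False by (simp add: indicator_def)
        qed (auto simp: indicator_def)
      qed simp
      also have "\<dots> = F (Complex x R) - F (Complex x (-R))"
      proof (rule integral_FTC_atLeastAtMost)
        show "-R \<le> R" using True by simp
        fix y assume "-R \<le> y" "y \<le> R"
        have "((F \<circ> (\<lambda>t. Complex x t)) has_derivative (F' (Complex x y) \<circ> (\<lambda>h. h *\<^sub>R \<i>))) (at y within {-R..R})"
          by (rule diff_chain_within[OF line_y_deriv]) (rule has_derivative_at_withinI[OF der])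
        then show "((\<lambda>t. F (Complex x t)) has_vector_derivative F' (Complex x y) \<i>) (at y within {-R..R})"
          by (simp add: has_vector_derivative_def o_def lin)
      next
        show "continuous_on {-R..R} (\<lambda>y. F' (Complex x y) \<i>)"
          by (rule continuous_on_compose2[OF ci, of _ "\<lambda>y. Complex x y"]) (auto simp: Complex_eq intro!: continuous_intros)
      qed
      also have "\<dots> = 0"
        using supp[of "Complex x R"] supp[of "Complex x (-R)"] True
          abs_Im_le_cmod[of "Complex x R"] abs_Im_le_cmod[of "Complex x (-R)"] by simp
      finally show ?thesis .
    next
      case False
      then have "\<forall>z. F z = 0" using R0 by auto
      then have "F' z = (\<lambda>v. 0)" for z using deriv_zero_on_open[OF der, of UNIV] by auto
      then show ?thesis by simp
    qed
    show ?thesis using complex_fubini(2)[OF integ[OF ci]] inner by simp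
  qed
qed

lemma cover_cont:
  fixes f :: "complex \<Rightarrow> 'b::real_normed_vector"
  assumes "closed K" "K \<subseteq> ball 0 1" "continuous_on (ball 0 1) f" "\<And>z. z \<notin> K \<Longrightarrow> f z = 0"
  shows "continuous_on UNIV f"
proof -
  have "continuous_on (-K) f"
    by (rule continuous_on_cong[THEN iffD1, OF refl _ continuous_on_const[of _ 0]]) (use assms(4) in auto)
  then have "continuous_on (ball 0 1 \<union> -K) f"
    using continuous_on_open_Un[of "ball 0 1" "-K" f] assms(1,3) by (simp add: open_Compl)
  moreover have "ball 0 1 \<union> -K = UNIV" using assms(2) by auto
  ultimately show ?thesis by simp
qed

lemma cover_der:
  fixes f :: "complex \<Rightarrow> 'b::real_normed_vector"
  assumes "closed K" "K \<subseteq> ball 0 1" "\<And>z. z \<in> ball 0 1 \<Longrightarrow> (f has_derivative f' z) (at z)"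
    "\<And>z. z \<notin> K \<Longrightarrow> f z = 0" "\<And>z. z \<notin> K \<Longrightarrow> f' z = (\<lambda>v. 0)"
  shows "(f has_derivative f' z) (at z)"
proof (cases "z \<in> ball 0 1")
  case True then show ?thesis using assms(3) by blast
next
  case False
  then have z: "z \<notin> K" using assms(2) by auto
  have "((\<lambda>x. 0) has_derivative (\<lambda>v. 0)) (at z)" by simp
  then have "(f has_derivative (\<lambda>v. 0)) (at z)"
    by (rule has_derivative_transform_within_open[of _ _ _ _ "-K"]) (use assms z in \<open>auto simp: open_Compl\<close>)
  then show ?thesis using assms(5)[OF z] by simp
qed

lemma integ_cs:
  fixes f :: "complex \<Rightarrow> 'b::{banach,second_countable_topology}"
  assumes "continuous_on UNIV f" "\<And>z. z \<notin> cball 0 1 \<Longrightarrow> f z = 0"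
  shows "integrable lborel f"
proof -
  have "integrable lborel (\<lambda>z. indicator (cball 0 1) z *\<^sub>R f z)"
    by (rule borel_integrable_compact) (use assms in \<open>auto intro: continuous_on_subset\<close>)
  moreover have "(\<lambda>z. indicator (cball 0 1) z *\<^sub>R f z) = f"
    using assms(2) by (auto simp: indicator_def fun_eq_iff)
  ultimately show ?thesis by simp
qed

lemma test_fun_facts:
  assumes "test_fun_disk \<phi> D"
  obtains K where "compact K" "K \<subseteq> ball 0 1" "\<And>z. z \<notin> K \<Longrightarrow> \<phi> z = 0"
    "\<And>z. z \<notin> K \<Longrightarrow> D z = 0" "\<And>z. (\<phi> has_derivative (\<lambda>v. D z \<bullet> v)) (at z)"
    "continuous_on UNIV D" "continuous_on UNIV \<phi>"
proof -
  define K where "K = closure {x. \<phi> x \<noteq> 0}"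
  have c: "compact K" "K \<subseteq> ball 0 1" using assms unfolding K_def test_fun_disk_def by blast+
  have der: "(\<phi> has_derivative (\<lambda>v. D z \<bullet> v)) (at z)" for z using assms unfolding test_fun_disk_def by blast
  have cD: "continuous_on UNIV D" using assms unfolding test_fun_disk_def by blast
  have z: "\<phi> z = 0" if "z \<notin> K" for z using that closure_subset[of "{x. \<phi> x \<noteq> 0}"] unfolding K_def by auto
  have Dz: "D z = 0" if "z \<notin> K" for z
  proof -
    have "(\<lambda>v. D z \<bullet> v) = (\<lambda>v. 0)"
      by (rule deriv_zero_on_open[OF der, of "-K"]) (use that z c in \<open>auto simp: open_Compl compact_imp_closed\<close>)
    then have "D z \<bullet> D z = 0" by (rule fun_cong)
    then show ?thesis by simp
  qed
  have cphi: "continuous_on UNIV \<phi>"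
    by (rule continuous_at_imp_continuous_on) (use der has_derivative_continuous in blast)
  show ?thesis by (rule that[OF c z Dz der cD cphi])
qed

lemma inner_self_deriv: "((\<lambda>z::complex. z \<bullet> z) has_derivative (\<lambda>v. 2 * (z \<bullet> v))) (at z)"
proof -
  have "((\<lambda>z::complex. z \<bullet> z) has_derivative (\<lambda>v. z \<bullet> v + v \<bullet> z)) (at z)"
    by (rule has_derivative_inner[OF has_derivative_ident has_derivative_ident])
  then show ?thesis by (simp add: inner_commute)
qed

lemma hardy_test:
  assumes tf: "test_fun_disk \<phi> D"
  shows "integral\<^sup>L lborel (\<lambda>z. (\<phi> z)\<^sup>2 * (1 / (1 - (cmod z)\<^sup>2)\<^sup>2)) \<le> integral\<^sup>L lborel (\<lambda>z. (cmod (D z))\<^sup>2)"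
proof -
  obtain K where K: "compact K" "K \<subseteq> ball 0 1" and z0: "\<And>z. z \<notin> K \<Longrightarrow> \<phi> z = 0"
    and D0: "\<And>z. z \<notin> K \<Longrightarrow> D z = 0" and der: "\<And>z. (\<phi> has_derivative (\<lambda>v. D z \<bullet> v)) (at z)"
    and cD: "continuous_on UNIV D" and cphi: "continuous_on UNIV \<phi>"
    using test_fun_facts[OF tf] by metis
  have Kc: "closed K" using K(1) by (rule compact_imp_closed)
  define W where "W z = 1 / (1 - (cmod z)\<^sup>2)\<^sup>2" for z :: complex
  define a where "a z = inverse (1 - z \<bullet> z)" for z :: complex
  define V where "V z = a z *\<^sub>R z" for z
  define V' where "V' z v = a z *\<^sub>R v + (2 * a z * a z * (z \<bullet> v)) *\<^sub>R z" for z v :: complex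
  define F where "F z = (\<phi> z)\<^sup>2 *\<^sub>R V z" for z
  define F' where "F' z v = (\<phi> z)\<^sup>2 *\<^sub>R V' z v + (2 * \<phi> z * (D z \<bullet> v)) *\<^sub>R V z" for z v
  have qpos: "0 < 1 - z \<bullet> z" if "z \<in> ball 0 1" for z :: complex
  proof -
    have "norm z < 1" using that by simp
    then have "(norm z)\<^sup>2 < 1" by (simp add: power_less_one_iff abs_less_iff)
    then show ?thesis by (simp add: power2_norm_eq_inner)
  qed
  have derV: "(V has_derivative V' z) (at z)" if "z \<in> ball 0 1" for z
  proof -
    have q: "((\<lambda>z. 1 - z \<bullet> z) has_derivative (\<lambda>v. - (2 * (z \<bullet> v)))) (at z)"
      using has_derivative_diff[OF has_derivative_const inner_self_deriv] by simp
    have ia: "(a has_derivative (\<lambda>v. - (a z * (- (2 * (z \<bullet> v))) * a z))) (at z)"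
      unfolding a_def by (rule Deriv.has_derivative_inverse[OF _ q]) (use qpos[OF that] in auto)
    have "(V has_derivative (\<lambda>v. a z *\<^sub>R v + (- (a z * (- (2 * (z \<bullet> v))) * a z)) *\<^sub>R z)) (at z)"
      unfolding V_def[abs_def] by (rule has_derivative_scaleR[OF ia has_derivative_ident])
    then show ?thesis by (simp add: V'_def[abs_def] mult.commute mult.left_commute)
  qed
  have derF: "(F has_derivative F' z) (at z)" for z
  proof (rule cover_der[OF Kc K(2)])
    fix z :: complex assume z: "z \<in> ball 0 1"
    have p: "((\<lambda>z. (\<phi> z)\<^sup>2) has_derivative (\<lambda>v. 2 * \<phi> z * (D z \<bullet> v))) (at z)"
      using has_derivative_mult[OF der der, of z] by (simp add: power2_eq_square algebra_simps)
    show "(F has_derivative F' z) (at z)"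
      unfolding F_def[abs_def] F'_def
      using has_derivative_scaleR[OF p derV[OF z]] by (simp add: algebra_simps)
  next
    fix z assume "z \<notin> K"
    then show "F z = 0" "F' z = (\<lambda>v. 0)" using z0 D0 by (auto simp: F_def F'_def fun_eq_iff)
  qed
  have ca: "continuous_on (ball 0 1) a"
    unfolding a_def by (intro continuous_intros) (use qpos in force)
  have cV: "continuous_on (ball 0 1) V"
    unfolding V_def by (intro continuous_intros ca)
  have cF1: "continuous_on UNIV (\<lambda>z. F' z 1)"
    by (rule cover_cont[OF Kc K(2)], unfold F'_def V'_def,
        (intro continuous_intros ca cV continuous_on_subset[OF cphi] continuous_on_subset[OF cD]; simp),
        simp add: z0 D0)
  have cFi: "continuous_on UNIV (\<lambda>z. F' z \<i>)"
    by (rule cover_cont[OF Kc K(2)], unfold F'_def V'_def,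
        (intro continuous_intros ca cV continuous_on_subset[OF cphi] continuous_on_subset[OF cD]; simp),
        simp add: z0 D0)
  have suppF: "F z = 0" if "1 \<le> cmod z" for z
  proof -
    have "z \<notin> K" using K(2) that by auto
    then show ?thesis by (simp add: F_def z0)
  qed
  have divs: "integral\<^sup>L lborel (\<lambda>z. F' z 1) = 0" "integral\<^sup>L lborel (\<lambda>z. F' z \<i>) = 0"
    using div_zero[OF derF cF1 cFi suppF] by auto
  have F'0: "F' z v = 0" if "z \<notin> K" for z v using that by (simp add: F'_def z0 D0)
  have ident: "Re (F' z 1) + Im (F' z \<i>) = 2 * ((\<phi> z)\<^sup>2 * W z) + 2 * (\<phi> z * (D z \<bullet> V z))" for z
  proof (cases "z \<in> ball 0 1")
    case True
    have q: "0 < 1 - z \<bullet> z" by (rule qpos[OF True])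
    have w: "W z = a z * a z" unfolding W_def a_def power2_norm_eq_inner
      by (simp add: power2_eq_square divide_inverse)
    have aq: "a z * (1 - z \<bullet> z) = 1" unfolding a_def using q by simp
    have "Re (F' z 1) + Im (F' z \<i>) = (\<phi> z)\<^sup>2 * (2 * a z + 2 * a z * a z * (z \<bullet> z))
          + 2 * (\<phi> z * (D z \<bullet> V z))"
    proof -
      have r1: "Re (F' z 1) = (\<phi> z)\<^sup>2 * (a z + 2 * a z * a z * (Re z * Re z)) + 2 * \<phi> z * Re (D z) * (a z * Re z)"
        by (simp add: F'_def V'_def V_def inner_complex_def)
      have r2: "Im (F' z \<i>) = (\<phi> z)\<^sup>2 * (a z + 2 * a z * a z * (Im z * Im z)) + 2 * \<phi> z * Im (D z) * (a z * Im z)"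
        by (simp add: F'_def V'_def V_def inner_complex_def)
      have r3: "D z \<bullet> V z = a z * (Re (D z) * Re z + Im (D z) * Im z)"
        by (simp add: V_def inner_complex_def algebra_simps)
      have r4: "z \<bullet> z = Re z * Re z + Im z * Im z" by (simp add: inner_complex_def)
      show ?thesis unfolding r1 r2 r3 r4 by algebra
    qed
    also have "2 * a z + 2 * a z * a z * (z \<bullet> z) = 2 * (a z * a z)"
    proof -
      have e: "1 + a z * (z \<bullet> z) = a z" using aq by (simp add: algebra_simps)
      have "2 * a z + 2 * a z * a z * (z \<bullet> z) = 2 * a z * (1 + a z * (z \<bullet> z))"
        by (simp add: algebra_simps)
      then show ?thesis by (simp only: e)
    qed
    finally show ?thesis using w by (simp add: algebra_simps)
  next
    case False
    then have "z \<notin> K" using K(2) by auto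
    then show ?thesis by (simp add: F'0 z0 D0)
  qed
  have cW: "continuous_on (ball 0 1) W"
  proof -
    have "continuous_on (ball 0 1) (\<lambda>z::complex. 1 / (1 - (cmod z)\<^sup>2)\<^sup>2)"
      by (intro continuous_intros) (use qpos in \<open>force simp: power2_norm_eq_inner\<close>)
    then show ?thesis unfolding W_def .
  qed
  have zK: "z \<notin> cball 0 1 \<Longrightarrow> z \<notin> K" for z using K(2) by auto
  have c1: "continuous_on UNIV (\<lambda>z. (\<phi> z)\<^sup>2 * W z)"
    by (rule cover_cont[OF Kc K(2)], (intro continuous_intros cW continuous_on_subset[OF cphi]; simp), simp add: z0)
  have c2: "continuous_on UNIV (\<lambda>z. \<phi> z * (D z \<bullet> V z))"
    by (rule cover_cont[OF Kc K(2)], (intro continuous_intros cV continuous_on_subset[OF cphi] continuous_on_subset[OF cD]; simp), simp add: z0)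
  have c3: "continuous_on UNIV (\<lambda>z. (cmod (D z))\<^sup>2)"
    by (intro continuous_intros cD)
  have i1: "integrable lborel (\<lambda>z. (\<phi> z)\<^sup>2 * W z)" by (rule integ_cs[OF c1]) (simp add: z0 zK)
  have i2: "integrable lborel (\<lambda>z. \<phi> z * (D z \<bullet> V z))" by (rule integ_cs[OF c2]) (simp add: z0 zK)
  have i3: "integrable lborel (\<lambda>z. (cmod (D z))\<^sup>2)" by (rule integ_cs[OF c3]) (simp add: D0 zK)
  have iF1: "integrable lborel (\<lambda>z. F' z 1)" by (rule integ_cs[OF cF1]) (simp add: F'0 zK)
  have iFi: "integrable lborel (\<lambda>z. F' z \<i>)" by (rule integ_cs[OF cFi]) (simp add: F'0 zK)
  have "0 = integral\<^sup>L lborel (\<lambda>z. Re (F' z 1) + Im (F' z \<i>))"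
    using divs iF1 iFi by (simp add: integral_add)
  also have "\<dots> = integral\<^sup>L lborel (\<lambda>z. 2 * ((\<phi> z)\<^sup>2 * W z) + 2 * (\<phi> z * (D z \<bullet> V z)))"
    by (simp only: ident)
  also have "\<dots> = 2 * integral\<^sup>L lborel (\<lambda>z. (\<phi> z)\<^sup>2 * W z) + 2 * integral\<^sup>L lborel (\<lambda>z. \<phi> z * (D z \<bullet> V z))"
    using i1 i2 by (simp add: integral_add)
  finally have AB: "integral\<^sup>L lborel (\<lambda>z. (\<phi> z)\<^sup>2 * W z) = integral\<^sup>L lborel (\<lambda>z. - (\<phi> z * (D z \<bullet> V z)))"
    by simp
  have pw: "- (\<phi> z * (D z \<bullet> V z)) \<le> ((\<phi> z)\<^sup>2 * W z + (cmod (D z))\<^sup>2) / 2" for z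
  proof (cases "z \<in> ball 0 1")
    case True
    have nV: "(norm (V z))\<^sup>2 \<le> W z"
    proof -
      have q: "0 < 1 - z \<bullet> z" by (rule qpos[OF True])
      have w: "W z = a z * a z" unfolding W_def a_def power2_norm_eq_inner
        by (simp add: power2_eq_square divide_inverse)
      have "(norm (V z))\<^sup>2 = a z * a z * (z \<bullet> z)"
        by (simp add: V_def power2_eq_square power2_norm_eq_inner[symmetric] abs_mult_self_eq)
      also have "\<dots> \<le> a z * a z * 1"
        using q by (intro mult_left_mono) auto
      finally show ?thesis using w by simp
    qed
    have cs: "\<bar>D z \<bullet> V z\<bar> \<le> norm (D z) * norm (V z)" by (rule Cauchy_Schwarz_ineq2)
    have "- (\<phi> z * (D z \<bullet> V z)) \<le> \<bar>\<phi> z\<bar> * \<bar>D z \<bullet> V z\<bar>"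
      using abs_ge_minus_self[of "\<phi> z * (D z \<bullet> V z)"] by (simp add: abs_mult)
    also have "\<dots> \<le> \<bar>\<phi> z\<bar> * (norm (D z) * norm (V z))"
      using cs by (rule mult_left_mono) simp
    also have "\<dots> = (\<bar>\<phi> z\<bar> * norm (V z)) * norm (D z)" by simp
    also have "\<dots> \<le> ((\<bar>\<phi> z\<bar> * norm (V z))\<^sup>2 + (norm (D z))\<^sup>2) / 2"
      using sum_squares_bound[of "\<bar>\<phi> z\<bar> * norm (V z)" "norm (D z)"] by simp
    also have "(\<bar>\<phi> z\<bar> * norm (V z))\<^sup>2 \<le> (\<phi> z)\<^sup>2 * W z"
      using nV by (simp add: power_mult_distrib mult_left_mono)
    finally show ?thesis by simp
  next
    case False
    then have "z \<notin> K" using K(2) by auto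
    then show ?thesis by (simp add: z0 D0)
  qed
  have "integral\<^sup>L lborel (\<lambda>z. (\<phi> z)\<^sup>2 * W z) \<le> integral\<^sup>L lborel (\<lambda>z. ((\<phi> z)\<^sup>2 * W z + (cmod (D z))\<^sup>2) / 2)"
    unfolding AB by (rule integral_mono) (use i1 i2 i3 pw in auto)
  also have "\<dots> = (integral\<^sup>L lborel (\<lambda>z. (\<phi> z)\<^sup>2 * W z) + integral\<^sup>L lborel (\<lambda>z. (cmod (D z))\<^sup>2)) / 2"
    using i1 i3 by (simp add: integral_add)
  finally show ?thesis unfolding W_def by simp
qed

definition Pc :: "real \<Rightarrow> real \<Rightarrow> real" where
  "Pc c t = (if t < c then - (c - t)\<^sup>2 else 0)"
definition Pc' :: "real \<Rightarrow> real \<Rightarrow> real" where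
  "Pc' c t = (if t < c then 2 * (c - t) else 0)"

lemma Pc_deriv: "(Pc c has_real_derivative Pc' c t) (at t)"
proof -
  consider "t < c" | "t > c" | "t = c" by linarith
  then show ?thesis
  proof cases
    case 1
    have "((\<lambda>t. - (c - t)\<^sup>2) has_real_derivative 2 * (c - t)) (at t)"
      by (auto intro!: derivative_eq_intros)
    then have "((\<lambda>t. - (c - t)\<^sup>2) has_real_derivative Pc' c t) (at t)" using 1 by (simp add: Pc'_def)
    then show ?thesis
      by (rule has_field_derivative_transform_within_open[where S="{..<c}"]) (use 1 in \<open>auto simp: Pc_def\<close>)
  next
    case 2
    have "((\<lambda>t. 0) has_real_derivative Pc' c t) (at t)" using 2 by (simp add: Pc'_def)
    then show ?thesis
      by (rule has_field_derivative_transform_within_open[where S="{c<..}"]) (use 2 in \<open>auto simp: Pc_def\<close>)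
  next
    case 3
    have "((\<lambda>h. (Pc c (c + h) - Pc c c) / h) \<longlongrightarrow> 0) (at 0)"
    proof (rule tendsto_0_le[of "\<lambda>h. h" _ _ 1])
      show "((\<lambda>h::real. h) \<longlongrightarrow> 0) (at 0)" by (rule tendsto_ident_at[THEN filterlim_mono]) (auto intro: tendsto_ident_at)
      show "\<forall>\<^sub>F h in at 0. norm ((Pc c (c + h) - Pc c c) / h) \<le> norm h * 1"
        by (rule always_eventually) (auto simp: Pc_def power2_eq_square abs_mult)
    qed
    then show ?thesis using 3 by (simp add: DERIV_def Pc'_def)
  qed
qed

lemma Pc_cont: "continuous_on UNIV (Pc c)" "continuous_on UNIV (Pc' c)"
proof -
  show "continuous_on UNIV (Pc c)"
    by (rule continuous_at_imp_continuous_on) (use Pc_deriv DERIV_isCont in blast)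
  have "continuous_on UNIV (\<lambda>t. 2 * max (c - t) 0)" by (intro continuous_intros)
  moreover have "Pc' c = (\<lambda>t. 2 * max (c - t) 0)" by (auto simp: Pc'_def fun_eq_iff max_def)
  ultimately show "continuous_on UNIV (Pc' c)" by simp
qed

lemma norm_sq_deriv: "((\<lambda>z::complex. (cmod (z - x))\<^sup>2) has_derivative (\<lambda>v. 2 * ((z - x) \<bullet> v))) (at z)"
proof -
  have "((\<lambda>z::complex. (z - x) \<bullet> (z - x)) has_derivative (\<lambda>v. (z - x) \<bullet> v + v \<bullet> (z - x))) (at z)"
    using has_derivative_inner[OF has_derivative_diff[OF has_derivative_ident has_derivative_const]
        has_derivative_diff[OF has_derivative_ident has_derivative_const]] by simp
  then show ?thesis by (simp add: inner_commute power2_norm_eq_inner)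
qed

lemma weighted_mean:
  fixes \<zeta> :: "complex \<Rightarrow> complex"
  assumes hol: "\<zeta> holomorphic_on ball 0 1" and s: "0 < s" "cball x s \<subseteq> ball 0 1"
  shows "integral\<^sup>L lborel (\<lambda>z. Pc' (s\<^sup>2) ((cmod (z - x))\<^sup>2) *\<^sub>R (\<zeta> z - \<zeta> x)) = 0"
proof -
  define k where "k = (\<lambda>z. if z = x then deriv \<zeta> x else (\<zeta> z - \<zeta> x) / (z - x))"
  have holk: "k holomorphic_on ball 0 1" unfolding k_def by (rule pole_lemma_open[OF hol open_ball])
  define \<tau> where "\<tau> z = (cmod (z - x))\<^sup>2" for z
  define F where "F z = Pc (s\<^sup>2) (\<tau> z) *\<^sub>R k z" for z
  define F' where "F' z v = Pc (s\<^sup>2) (\<tau> z) *\<^sub>R (deriv k z * v) + (Pc' (s\<^sup>2) (\<tau> z) * (2 * ((z - x) \<bullet> v))) *\<^sub>R k z" for z v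
  have Kc: "closed (cball x s)" by simp
  have out: "Pc (s\<^sup>2) (\<tau> z) = 0" "Pc' (s\<^sup>2) (\<tau> z) = 0" if "z \<notin> cball x s" for z
  proof -
    have "s < cmod (z - x)" using that by (simp add: dist_norm norm_minus_commute)
    then have "s\<^sup>2 < \<tau> z" unfolding \<tau>_def using s(1) by (simp add: power_strict_mono)
    then show "Pc (s\<^sup>2) (\<tau> z) = 0" "Pc' (s\<^sup>2) (\<tau> z) = 0" by (auto simp: Pc_def Pc'_def)
  qed
  have derF: "(F has_derivative F' z) (at z)" for z
  proof (rule cover_der[OF Kc s(2)])
    fix z :: complex assume z: "z \<in> ball 0 1"
    have dk: "(k has_derivative (\<lambda>v. deriv k z * v)) (at z)"
      using holomorphic_derivI[OF holk open_ball z] by (simp add: has_field_derivative_def)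
    have dP: "((\<lambda>z. Pc (s\<^sup>2) (\<tau> z)) has_derivative (\<lambda>v. Pc' (s\<^sup>2) (\<tau> z) * (2 * ((z - x) \<bullet> v)))) (at z)"
    proof -
      have "((Pc (s\<^sup>2) \<circ> \<tau>) has_derivative ((\<lambda>h. Pc' (s\<^sup>2) (\<tau> z) * h) \<circ> (\<lambda>v. 2 * ((z - x) \<bullet> v)))) (at z)"
        by (rule diff_chain_at) (use norm_sq_deriv[of x z] Pc_deriv in \<open>auto simp: \<tau>_def[abs_def] has_field_derivative_def\<close>)
      then show ?thesis by (simp add: o_def)
    qed
    show "(F has_derivative F' z) (at z)"
      unfolding F_def[abs_def] F'_def using has_derivative_scaleR[OF dP dk] by (simp add: algebra_simps)
  next
    fix z assume "z \<notin> cball x s"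
    then show "F z = 0" "F' z = (\<lambda>v. 0)" using out by (auto simp: F_def F'_def fun_eq_iff)
  qed
  have ck: "continuous_on (ball 0 1) k" by (rule holomorphic_on_imp_continuous_on[OF holk])
  have cdk: "continuous_on (ball 0 1) (deriv k)"
    by (rule holomorphic_on_imp_continuous_on[OF holomorphic_deriv[OF holk open_ball]])
  have ctau: "continuous_on UNIV \<tau>" unfolding \<tau>_def[abs_def] by (intro continuous_intros)
  have cP: "continuous_on A (\<lambda>z. Pc (s\<^sup>2) (\<tau> z))" "continuous_on A (\<lambda>z. Pc' (s\<^sup>2) (\<tau> z))" for A
    by (rule continuous_on_compose2[OF Pc_cont(1) continuous_on_subset[OF ctau]]; simp)
       (rule continuous_on_compose2[OF Pc_cont(2) continuous_on_subset[OF ctau]]; simp)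
  have cF1: "continuous_on UNIV (\<lambda>z. F' z 1)"
    by (rule cover_cont[OF Kc s(2)], unfold F'_def,
        (intro continuous_intros ck cdk cP; simp), simp add: out)
  have cFi: "continuous_on UNIV (\<lambda>z. F' z \<i>)"
    by (rule cover_cont[OF Kc s(2)], unfold F'_def,
        (intro continuous_intros ck cdk cP; simp), simp add: out)
  have suppF: "F z = 0" if "1 \<le> cmod z" for z
  proof -
    have "z \<notin> cball x s" using s(2) that by auto
    then show ?thesis by (simp add: F_def out)
  qed
  have F'0: "F' z v = 0" if "z \<notin> cball 0 1" for z v
  proof -
    have "z \<notin> cball x s" using s(2) that by auto
    then show ?thesis by (simp add: F'_def out)
  qed
  have divs: "integral\<^sup>L lborel (\<lambda>z. F' z 1) = 0" "integral\<^sup>L lborel (\<lambda>z. F' z \<i>) = 0"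
    using div_zero[OF derF cF1 cFi suppF] by auto
  have iF1: "integrable lborel (\<lambda>z. F' z 1)" by (rule integ_cs[OF cF1]) (simp add: F'0)
  have iFi: "integrable lborel (\<lambda>z. F' z \<i>)" by (rule integ_cs[OF cFi]) (simp add: F'0)
  have ident: "F' z 1 + \<i> * F' z \<i> = 2 *\<^sub>R (Pc' (s\<^sup>2) ((cmod (z - x))\<^sup>2) *\<^sub>R (\<zeta> z - \<zeta> x))" for z
  proof -
    have kz: "(z - x) * k z = \<zeta> z - \<zeta> x" by (simp add: k_def)
    have "F' z 1 + \<i> * F' z \<i> = (Pc' (s\<^sup>2) (\<tau> z) * 2) *\<^sub>R (((z - x) \<bullet> 1 + \<i> * ((z - x) \<bullet> \<i>)) * k z)"
      by (simp add: F'_def algebra_simps scaleR_conv_of_real)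
    also have "(z - x) \<bullet> 1 + \<i> * ((z - x) \<bullet> \<i>) = z - x"
      by (simp add: inner_complex_def complex_eq_iff)
    finally show ?thesis by (simp add: kz \<tau>_def)
  qed
  have "integral\<^sup>L lborel (\<lambda>z. 2 *\<^sub>R (Pc' (s\<^sup>2) ((cmod (z - x))\<^sup>2) *\<^sub>R (\<zeta> z - \<zeta> x))) = 0"
    unfolding ident[symmetric] using divs iF1 iFi by (simp add: integral_add)
  then show ?thesis unfolding integral_scaleR_right by simp
qed

lemma Pc'_props: "0 \<le> Pc' c t" "0 \<le> c \<Longrightarrow> 0 \<le> t \<Longrightarrow> Pc' c t \<le> 2 * c"
  by (auto simp: Pc'_def)

lemma bergman_s:
  fixes \<zeta> :: "complex \<Rightarrow> complex"
  assumes hol: "\<zeta> holomorphic_on ball 0 1" and s: "0 < s" "cball x s \<subseteq> ball 0 1"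
  shows "(cmod (\<zeta> x))\<^sup>2 * s ^ 4 \<le> integral\<^sup>L lborel (\<lambda>z. Pc' (s\<^sup>2) ((cmod (z - x))\<^sup>2) * (cmod (\<zeta> z))\<^sup>2)"
proof -
  define \<rho> where "\<rho> z = Pc' (s\<^sup>2) ((cmod (z - x))\<^sup>2)" for z
  define c where "c = \<zeta> x"
  have Kc: "closed (cball x s)" by simp
  have \<rho>0: "\<rho> z = 0" if "z \<notin> cball x s" for z
  proof -
    have "s < cmod (z - x)" using that by (simp add: dist_norm norm_minus_commute)
    then have "s\<^sup>2 < (cmod (z - x))\<^sup>2" using s(1) by (simp add: power_strict_mono)
    then show ?thesis by (simp add: \<rho>_def Pc'_def)
  qed
  have \<rho>pos: "0 \<le> \<rho> z" for z by (simp add: \<rho>_def Pc'_props)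
  have c\<rho>: "continuous_on UNIV \<rho>" unfolding \<rho>_def
    by (rule continuous_on_compose2[OF Pc_cont(2)]) (auto intro!: continuous_intros)
  have cz: "continuous_on (ball 0 1) \<zeta>" by (rule holomorphic_on_imp_continuous_on[OF hol])
  have out1: "z \<notin> cball x s" if "z \<notin> cball 0 1" for z using that s(2) by auto
  have \<rho>1: "\<rho> z = 0" if "\<not> cmod z \<le> 1" for z using \<rho>0 out1 that by simp
  have i\<rho>: "integrable lborel \<rho>" by (rule integ_cs[OF c\<rho>]) (use \<rho>0 out1 in blast)
  have i\<rho>z: "integrable lborel (\<lambda>z. \<rho> z *\<^sub>R \<zeta> z)"
    by (rule integ_cs[OF cover_cont[OF Kc s(2)]]) (auto intro!: continuous_intros continuous_on_subset[OF c\<rho>] cz simp: \<rho>0 \<rho>1)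
  have i\<rho>z2: "integrable lborel (\<lambda>z. \<rho> z * (cmod (\<zeta> z))\<^sup>2)"
    by (rule integ_cs[OF cover_cont[OF Kc s(2)]]) (auto intro!: continuous_intros continuous_on_subset[OF c\<rho>] cz simp: \<rho>0 \<rho>1)
  have wm: "integral\<^sup>L lborel (\<lambda>z. \<rho> z *\<^sub>R (\<zeta> z - c)) = 0"
    using weighted_mean[OF hol s] unfolding \<rho>_def c_def .
  have "integral\<^sup>L lborel (\<lambda>z. \<rho> z *\<^sub>R \<zeta> z) = integral\<^sup>L lborel (\<lambda>z. \<rho> z *\<^sub>R (\<zeta> z - c) + \<rho> z *\<^sub>R c)"
    by (simp add: algebra_simps)
  also have "\<dots> = integral\<^sup>L lborel \<rho> *\<^sub>R c"
  proof -
    have i2: "integrable lborel (\<lambda>z. \<rho> z *\<^sub>R c)" using i\<rho> by simp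
    have i1: "integrable lborel (\<lambda>z. \<rho> z *\<^sub>R (\<zeta> z - c))"
      using Bochner_Integration.integrable_diff[OF i\<rho>z i2] by (simp add: scaleR_diff_right)
    show ?thesis using Bochner_Integration.integral_add[OF i1 i2] wm i\<rho> by simp
  qed
  finally have mean: "integral\<^sup>L lborel (\<lambda>z. \<rho> z *\<^sub>R \<zeta> z) = integral\<^sup>L lborel \<rho> *\<^sub>R c" .
  define R where "R = integral\<^sup>L lborel \<rho>"
  have "R * (cmod c)\<^sup>2 = Re (cnj c * integral\<^sup>L lborel (\<lambda>z. \<rho> z *\<^sub>R \<zeta> z))"
  proof -
    have "(cmod c)\<^sup>2 = (Re c)\<^sup>2 + (Im c)\<^sup>2" by (rule cmod_power2)
    then show ?thesis unfolding mean R_def by (simp add: power2_eq_square algebra_simps)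
  qed
  also have "\<dots> = integral\<^sup>L lborel (\<lambda>z. \<rho> z * Re (cnj c * \<zeta> z))"
  proof -
    have "cnj c * integral\<^sup>L lborel (\<lambda>z. \<rho> z *\<^sub>R \<zeta> z) = integral\<^sup>L lborel (\<lambda>z. cnj c * (\<rho> z *\<^sub>R \<zeta> z))"
      by (rule integral_mult_right_zero[symmetric])
    also have "Re \<dots> = integral\<^sup>L lborel (\<lambda>z. Re (cnj c * (\<rho> z *\<^sub>R \<zeta> z)))"
      by (rule integral_Re[symmetric]) (rule Bochner_Integration.integrable_mult_right[OF i\<rho>z])
    also have "\<dots> = integral\<^sup>L lborel (\<lambda>z. \<rho> z * Re (cnj c * \<zeta> z))"
      by (rule Bochner_Integration.integral_cong) (simp_all add: algebra_simps)
    finally show ?thesis .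
  qed
  also have "\<dots> \<le> integral\<^sup>L lborel (\<lambda>z. \<rho> z * (((cmod c)\<^sup>2 + (cmod (\<zeta> z))\<^sup>2) / 2))"
  proof (rule integral_mono)
    show "integrable lborel (\<lambda>z. \<rho> z * Re (cnj c * \<zeta> z))"
    proof -
      have e: "(\<lambda>z. \<rho> z * Re (cnj c * \<zeta> z)) = (\<lambda>z. Re (cnj c * (\<rho> z *\<^sub>R \<zeta> z)))"
        by (simp add: algebra_simps fun_eq_iff)
      show ?thesis unfolding e
        by (rule integrable_Re[OF Bochner_Integration.integrable_mult_right[OF i\<rho>z]])
    qed
    show "integrable lborel (\<lambda>z. \<rho> z * (((cmod c)\<^sup>2 + (cmod (\<zeta> z))\<^sup>2) / 2))"
      using i\<rho> i\<rho>z2 by (simp add: distrib_left add_divide_distrib)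
    fix z
    have "Re (cnj c * \<zeta> z) \<le> cmod c * cmod (\<zeta> z)"
      using complex_Re_le_cmod[of "cnj c * \<zeta> z"] by (simp add: norm_mult)
    also have "\<dots> \<le> ((cmod c)\<^sup>2 + (cmod (\<zeta> z))\<^sup>2) / 2"
      using sum_squares_bound[of "cmod c" "cmod (\<zeta> z)"] by simp
    finally show "\<rho> z * Re (cnj c * \<zeta> z) \<le> \<rho> z * (((cmod c)\<^sup>2 + (cmod (\<zeta> z))\<^sup>2) / 2)"
      by (rule mult_left_mono) (simp add: \<rho>pos)
  qed
  also have "\<dots> = (R * (cmod c)\<^sup>2 + integral\<^sup>L lborel (\<lambda>z. \<rho> z * (cmod (\<zeta> z))\<^sup>2)) / 2"
    using i\<rho> i\<rho>z2 unfolding R_def by (simp add: distrib_left add_divide_distrib Bochner_Integration.integral_add)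
  finally have key: "R * (cmod c)\<^sup>2 \<le> integral\<^sup>L lborel (\<lambda>z. \<rho> z * (cmod (\<zeta> z))\<^sup>2)" by simp
  define B where "B = cbox (x - Complex (s/2) (s/2)) (x + Complex (s/2) (s/2))"
  have mB: "measure lborel B = s * s"
    unfolding B_def measure_def using s(1)
    by (simp add: emeasure_lborel_cbox_eq Basis_complex_def inner_complex_def)
  have iB: "integrable lborel (indicator B :: complex \<Rightarrow> real)"
    unfolding B_def by (rule integrable_real_indicator) (auto simp: emeasure_lborel_cbox_eq)
  have "s ^ 4 = integral\<^sup>L lborel (\<lambda>z. s\<^sup>2 * indicator B z)"
    using mB by (simp add: power2_eq_square power4_eq_xxxx)
  also have "\<dots> \<le> R"
    unfolding R_def
  proof (rule integral_mono[OF _ i\<rho>])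
    show "integrable lborel (\<lambda>z. s\<^sup>2 * indicator B z)" using iB by simp
    fix z
    show "s\<^sup>2 * indicator B z \<le> \<rho> z"
    proof (cases "z \<in> B")
      case True
      then have h: "\<bar>Re (z - x)\<bar> \<le> s / 2" "\<bar>Im (z - x)\<bar> \<le> s / 2"
        unfolding B_def by (auto simp: mem_box Basis_complex_def inner_complex_def abs_if split: if_splits)
      have "(cmod (z - x))\<^sup>2 = (Re (z - x))\<^sup>2 + (Im (z - x))\<^sup>2" by (rule cmod_power2)
      also have "\<dots> \<le> (s/2)\<^sup>2 + (s/2)\<^sup>2"
        using h s(1) by (intro add_mono; subst abs_le_square_iff[symmetric]) auto
      finally have le: "(cmod (z - x))\<^sup>2 \<le> s\<^sup>2 / 2" by (simp add: power2_eq_square)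
      have "0 < s\<^sup>2" using s(1) by simp
      then have lt: "(cmod (z - x))\<^sup>2 < s\<^sup>2" using le by linarith
      then have "\<rho> z = 2 * (s\<^sup>2 - (cmod (z - x))\<^sup>2)" by (simp add: \<rho>_def Pc'_def)
      then show ?thesis using True le by simp
    qed (simp add: \<rho>pos)
  qed
  finally have R4: "s ^ 4 \<le> R" .
  have "(cmod c)\<^sup>2 * s ^ 4 \<le> (cmod c)\<^sup>2 * R" by (rule mult_left_mono[OF R4]) simp
  also have "\<dots> \<le> integral\<^sup>L lborel (\<lambda>z. \<rho> z * (cmod (\<zeta> z))\<^sup>2)" using key by (simp add: mult.commute)
  finally show ?thesis unfolding c_def \<rho>_def .
qed

lemma bergman_s2:
  fixes \<zeta> :: "complex \<Rightarrow> complex"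
  assumes hol: "\<zeta> holomorphic_on ball 0 1" and s: "0 < s" "cball x s \<subseteq> ball 0 1"
  shows "ennreal ((cmod (\<zeta> x))\<^sup>2 * s ^ 4) \<le> ennreal (2 * s\<^sup>2) * (\<integral>\<^sup>+z\<in>ball 0 1. ennreal ((cmod (\<zeta> z))\<^sup>2) \<partial>lebesgue)"
proof -
  define \<rho> where "\<rho> z = Pc' (s\<^sup>2) ((cmod (z - x))\<^sup>2)" for z
  have Kc: "closed (cball x s)" by simp
  have \<rho>0: "\<rho> z = 0" if "z \<notin> cball x s" for z
  proof -
    have "s < cmod (z - x)" using that by (simp add: dist_norm norm_minus_commute)
    then have "s\<^sup>2 < (cmod (z - x))\<^sup>2" using s(1) by (simp add: power_strict_mono)
    then show ?thesis by (simp add: \<rho>_def Pc'_def)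
  qed
  have \<rho>pos: "0 \<le> \<rho> z" for z by (simp add: \<rho>_def Pc'_props)
  have \<rho>le: "\<rho> z \<le> 2 * s\<^sup>2" for z by (simp add: \<rho>_def Pc'_props)
  have c\<rho>: "continuous_on UNIV \<rho>" unfolding \<rho>_def
    by (rule continuous_on_compose2[OF Pc_cont(2)]) (auto intro!: continuous_intros)
  have cz: "continuous_on (ball 0 1) \<zeta>" by (rule holomorphic_on_imp_continuous_on[OF hol])
  have out1: "z \<notin> cball x s" if "z \<notin> cball 0 1" for z using that s(2) by auto
  have \<rho>1: "\<rho> z = 0" if "\<not> cmod z \<le> 1" for z using \<rho>0 out1 that by simp
  have i\<rho>z2: "integrable lborel (\<lambda>z. \<rho> z * (cmod (\<zeta> z))\<^sup>2)"
    by (rule integ_cs[OF cover_cont[OF Kc s(2)]]) (auto intro!: continuous_intros continuous_on_subset[OF c\<rho>] cz simp: \<rho>0 \<rho>1)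
  have "ennreal ((cmod (\<zeta> x))\<^sup>2 * s ^ 4) \<le> ennreal (integral\<^sup>L lborel (\<lambda>z. \<rho> z * (cmod (\<zeta> z))\<^sup>2))"
    using bergman_s[OF hol s] unfolding \<rho>_def by (rule ennreal_leI)
  also have "\<dots> = (\<integral>\<^sup>+z. ennreal (\<rho> z * (cmod (\<zeta> z))\<^sup>2) \<partial>lborel)"
    by (rule nn_integral_eq_integral[symmetric, OF i\<rho>z2]) (simp add: \<rho>pos)
  also have "\<dots> \<le> (\<integral>\<^sup>+z. ennreal (2 * s\<^sup>2) * (ennreal ((cmod (\<zeta> z))\<^sup>2) * indicator (ball 0 1) z) \<partial>lborel)"
  proof (rule nn_integral_mono)
    fix z
    show "ennreal (\<rho> z * (cmod (\<zeta> z))\<^sup>2) \<le> ennreal (2 * s\<^sup>2) * (ennreal ((cmod (\<zeta> z))\<^sup>2) * indicator (ball 0 1) z)"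
    proof (cases "z \<in> ball 0 1")
      case True
      then show ?thesis
        using \<rho>le[of z] by (simp add: ennreal_mult[symmetric] mult_right_mono)
    next
      case False
      then have "z \<notin> cball x s" using s(2) by auto
      then show ?thesis by (simp add: \<rho>0)
    qed
  qed
  also have "\<dots> = ennreal (2 * s\<^sup>2) * (\<integral>\<^sup>+z. ennreal ((cmod (\<zeta> z))\<^sup>2) * indicator (ball 0 1) z \<partial>lborel)"
  proof (rule nn_integral_cmult)
    have m1: "(\<lambda>z. indicator (ball 0 1) z *\<^sub>R (cmod (\<zeta> z))\<^sup>2) \<in> borel_measurable borel"
      by (rule borel_measurable_continuous_on_indicator) (auto intro!: continuous_intros cz)
    have m2: "(\<lambda>z. ennreal (indicator (ball 0 1) z *\<^sub>R (cmod (\<zeta> z))\<^sup>2)) \<in> borel_measurable lborel"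
      using m1 by simp
    have eq: "(\<lambda>z. ennreal (indicator (ball 0 1) z *\<^sub>R (cmod (\<zeta> z))\<^sup>2)) = (\<lambda>z. ennreal ((cmod (\<zeta> z))\<^sup>2) * indicator (ball 0 1) z)"
      by (auto simp: indicator_def fun_eq_iff)
    show "(\<lambda>z. ennreal ((cmod (\<zeta> z))\<^sup>2) * indicator (ball 0 1) z) \<in> borel_measurable lborel"
      using m2 unfolding eq .
  qed
  also have "(\<integral>\<^sup>+z. ennreal ((cmod (\<zeta> z))\<^sup>2) * indicator (ball 0 1) z \<partial>lborel) = (\<integral>\<^sup>+z\<in>ball 0 1. ennreal ((cmod (\<zeta> z))\<^sup>2) \<partial>lebesgue)"
    by (simp add: nn_integral_completion)
  finally show ?thesis .
qed

lemma bergman: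
  fixes \<zeta> :: "complex \<Rightarrow> complex"
  assumes hol: "\<zeta> holomorphic_on ball 0 1" and x: "x \<in> ball 0 1"
  shows "ennreal ((cmod (\<zeta> x))\<^sup>2) \<le> 8 * (\<integral>\<^sup>+z\<in>ball 0 1. ennreal ((cmod (\<zeta> z))\<^sup>2) \<partial>lebesgue)
            * ennreal (1 / (1 - (cmod x)\<^sup>2)\<^sup>2)"
proof -
  define M where "M = (\<integral>\<^sup>+z\<in>ball 0 1. ennreal ((cmod (\<zeta> z))\<^sup>2) \<partial>lebesgue)"
  define r where "r = 1 - cmod x"
  have r: "0 < r" "r \<le> 1" using x by (auto simp: r_def)
  have xl: "cmod x < 1" using x by simp
  have Wpos: "0 < 1 / (1 - (cmod x)\<^sup>2)\<^sup>2"
  proof -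
    have "(cmod x)\<^sup>2 < 1" using xl by (simp add: power_less_one_iff abs_less_iff)
    then show ?thesis by simp
  qed
  show ?thesis
  proof (cases "M = \<infinity>")
    case True
    then show ?thesis using Wpos unfolding M_def[symmetric]
      by (simp add: ennreal_mult_top ennreal_top_mult)
  next
    case False
    then obtain m where m: "M = ennreal m" "0 \<le> m" by (cases M) auto
    have bs: "(cmod (\<zeta> x))\<^sup>2 * s\<^sup>2 \<le> 2 * m" if s: "0 < s" "s < r" for s
    proof -
      have sub: "cball x s \<subseteq> ball 0 1"
      proof
        fix z assume "z \<in> cball x s"
        then have "cmod (z - x) \<le> s" by (simp add: dist_norm norm_minus_commute)
        then have "cmod z \<le> cmod x + s" using norm_triangle_ineq[of x "z - x"] by simp
        then show "z \<in> ball 0 1" using s unfolding r_def by simp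
      qed
      have "ennreal ((cmod (\<zeta> x))\<^sup>2 * s ^ 4) \<le> ennreal (2 * s\<^sup>2 * m)"
        using bergman_s2[OF hol s(1) sub] m unfolding M_def by (simp add: ennreal_mult)
      then have "(cmod (\<zeta> x))\<^sup>2 * s ^ 4 \<le> 2 * s\<^sup>2 * m"
        using s(1) m(2) by (subst (asm) ennreal_le_iff) auto
      then have "s\<^sup>2 * ((cmod (\<zeta> x))\<^sup>2 * s\<^sup>2) \<le> s\<^sup>2 * (2 * m)"
        by (simp add: power4_eq_xxxx power2_eq_square algebra_simps)
      then show ?thesis using s(1) by (simp add: mult_le_cancel_left)
    qed
    have lim: "(cmod (\<zeta> x))\<^sup>2 * r\<^sup>2 \<le> 2 * m"
    proof (rule tendsto_upperbound)
      show "((\<lambda>s. (cmod (\<zeta> x))\<^sup>2 * s\<^sup>2) \<longlongrightarrow> (cmod (\<zeta> x))\<^sup>2 * r\<^sup>2) (at_left r)"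
        by (intro tendsto_intros)
      show "\<forall>\<^sub>F s in at_left r. (cmod (\<zeta> x))\<^sup>2 * s\<^sup>2 \<le> 2 * m"
        unfolding eventually_at_left_field using r bs by (intro exI[of _ 0]) auto
    qed (simp add: trivial_limit_at_left_real)
    have W4: "1 \<le> 4 * r\<^sup>2 * (1 / (1 - (cmod x)\<^sup>2)\<^sup>2)"
    proof -
      have e: "1 - (cmod x)\<^sup>2 = r * (1 + cmod x)" unfolding r_def by (simp add: power2_eq_square algebra_simps)
      have p: "0 < 1 + cmod x" by (smt (verit) norm_ge_zero)
      have "(r * (1 + cmod x))\<^sup>2 \<le> 4 * r\<^sup>2"
      proof -
        have "1 + cmod x \<le> 2" using xl by simp
        then have "(1 + cmod x)\<^sup>2 \<le> 2\<^sup>2" using p by (intro power_mono) auto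
        then have "r\<^sup>2 * (1 + cmod x)\<^sup>2 \<le> r\<^sup>2 * 4" by (intro mult_left_mono) auto
        then show ?thesis by (simp add: power_mult_distrib mult.commute)
      qed
      moreover have "0 < (r * (1 + cmod x))\<^sup>2" using r p by simp
      ultimately show ?thesis unfolding e by (simp add: field_simps)
    qed
    have "(cmod (\<zeta> x))\<^sup>2 \<le> (cmod (\<zeta> x))\<^sup>2 * (4 * r\<^sup>2 * (1 / (1 - (cmod x)\<^sup>2)\<^sup>2))"
      using mult_left_mono[OF W4, of "(cmod (\<zeta> x))\<^sup>2"] by simp
    also have "\<dots> = 4 * ((cmod (\<zeta> x))\<^sup>2 * r\<^sup>2) * (1 / (1 - (cmod x)\<^sup>2)\<^sup>2)" by (simp add: algebra_simps)
    also have "\<dots> \<le> 4 * (2 * m) * (1 / (1 - (cmod x)\<^sup>2)\<^sup>2)"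
      using lim Wpos by (intro mult_right_mono) (auto simp: mult.commute)
    finally have "(cmod (\<zeta> x))\<^sup>2 \<le> 8 * m * (1 / (1 - (cmod x)\<^sup>2)\<^sup>2)" by simp
    then have "ennreal ((cmod (\<zeta> x))\<^sup>2) \<le> ennreal (8 * m * (1 / (1 - (cmod x)\<^sup>2)\<^sup>2))"
      by (rule ennreal_leI)
    also have "ennreal (8 * m * (1 / (1 - (cmod x)\<^sup>2)\<^sup>2)) = 8 * ennreal m * ennreal (1 / (1 - (cmod x)\<^sup>2)\<^sup>2)"
      using m(2) Wpos by (subst ennreal_mult; simp add: ennreal_mult)
    finally show ?thesis using m unfolding M_def[symmetric] by simp
  qed
qed

lemma test_integrable:
  assumes tf: "test_fun_disk \<phi> D"
  shows "integrable lborel (\<lambda>z. (\<phi> z)\<^sup>2 * (1 / (1 - (cmod z)\<^sup>2)\<^sup>2))"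
    and "integrable lborel (\<lambda>z. (cmod (D z))\<^sup>2)"
    and "\<And>z. z \<notin> ball 0 1 \<Longrightarrow> \<phi> z = 0 \<and> D z = 0"
proof -
  obtain K where K: "compact K" "K \<subseteq> ball 0 1" and z0: "\<And>z. z \<notin> K \<Longrightarrow> \<phi> z = 0"
    and D0: "\<And>z. z \<notin> K \<Longrightarrow> D z = 0" and der: "\<And>z. (\<phi> has_derivative (\<lambda>v. D z \<bullet> v)) (at z)"
    and cD: "continuous_on UNIV D" and cphi: "continuous_on UNIV \<phi>"
    using test_fun_facts[OF tf] by metis
  have Kc: "closed K" using K(1) by (rule compact_imp_closed)
  have qpos: "0 < 1 - (cmod z)\<^sup>2" if "z \<in> ball 0 1" for z :: complex
  proof -
    have "norm z < 1" using that by simp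
    then have "(norm z)\<^sup>2 < 1" by (simp add: power_less_one_iff abs_less_iff)
    then show ?thesis by simp
  qed
  have cW: "continuous_on (ball 0 1) (\<lambda>z::complex. 1 / (1 - (cmod z)\<^sup>2)\<^sup>2)"
    by (intro continuous_intros) (use qpos in force)
  have zK: "z \<notin> cball 0 1 \<Longrightarrow> z \<notin> K" for z using K(2) by auto
  have c1: "continuous_on UNIV (\<lambda>z. (\<phi> z)\<^sup>2 * (1 / (1 - (cmod z)\<^sup>2)\<^sup>2))"
    by (rule cover_cont[OF Kc K(2)], (intro continuous_intros cW continuous_on_subset[OF cphi]; simp), simp add: z0)
  have c3: "continuous_on UNIV (\<lambda>z. (cmod (D z))\<^sup>2)"
    by (intro continuous_intros cD)
  show "integrable lborel (\<lambda>z. (\<phi> z)\<^sup>2 * (1 / (1 - (cmod z)\<^sup>2)\<^sup>2))" by (rule integ_cs[OF c1]) (simp add: z0 zK)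
  show "integrable lborel (\<lambda>z. (cmod (D z))\<^sup>2)" by (rule integ_cs[OF c3]) (simp add: D0 zK)
  show "\<phi> z = 0 \<and> D z = 0" if "z \<notin> ball 0 1" for z
    using that K(2) z0 D0 by blast
qed

lemma hardy_nn:
  assumes tf: "test_fun_disk \<phi> D"
  shows "(\<integral>\<^sup>+z\<in>ball 0 1. ennreal ((\<phi> z)\<^sup>2 * (1 / (1 - (cmod z)\<^sup>2)\<^sup>2)) \<partial>lebesgue)
         \<le> (\<integral>\<^sup>+z\<in>ball 0 1. ennreal ((cmod (D z))\<^sup>2) \<partial>lebesgue)"
proof -
  note i = test_integrable[OF tf]
  have "(\<integral>\<^sup>+z\<in>ball 0 1. ennreal ((\<phi> z)\<^sup>2 * (1 / (1 - (cmod z)\<^sup>2)\<^sup>2)) \<partial>lebesgue)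
      = (\<integral>\<^sup>+z. ennreal ((\<phi> z)\<^sup>2 * (1 / (1 - (cmod z)\<^sup>2)\<^sup>2)) \<partial>lborel)"
    unfolding nn_integral_completion
    by (rule nn_integral_cong) (use i(3) in \<open>auto simp: indicator_def\<close>)
  also have "\<dots> = ennreal (integral\<^sup>L lborel (\<lambda>z. (\<phi> z)\<^sup>2 * (1 / (1 - (cmod z)\<^sup>2)\<^sup>2)))"
    by (rule nn_integral_eq_integral[OF i(1)]) simp
  also have "\<dots> \<le> ennreal (integral\<^sup>L lborel (\<lambda>z. (cmod (D z))\<^sup>2))"
    by (rule ennreal_leI[OF hardy_test[OF tf]])
  also have "\<dots> = (\<integral>\<^sup>+z. ennreal ((cmod (D z))\<^sup>2) \<partial>lborel)"
    by (rule nn_integral_eq_integral[symmetric, OF i(2)]) simp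
  also have "\<dots> = (\<integral>\<^sup>+z\<in>ball 0 1. ennreal ((cmod (D z))\<^sup>2) \<partial>lebesgue)"
    unfolding nn_integral_completion
    by (rule nn_integral_cong) (use i(3) in \<open>auto simp: indicator_def\<close>)
  finally show ?thesis .
qed

lemma sq_split:
  fixes a b e :: real
  assumes "0 < e"
  shows "(a + b)\<^sup>2 \<le> (1 + e) * a\<^sup>2 + (1 + 1 / e) * b\<^sup>2"
proof -
  have "0 \<le> (sqrt e * a - b / sqrt e)\<^sup>2" by simp
  also have "\<dots> = e * a\<^sup>2 - 2 * a * b + b\<^sup>2 / e"
    using assms by (simp add: power2_diff power_divide power_mult_distrib field_simps power2_eq_square)
  finally have "2 * a * b \<le> e * a\<^sup>2 + b\<^sup>2 / e" by simp
  then show ?thesis by (simp add: power2_sum field_simps)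
qed

lemma nn_lin2:
  fixes a b :: "'a \<Rightarrow> ennreal"
  assumes [measurable]: "a \<in> borel_measurable M" "b \<in> borel_measurable M" "S \<in> sets M"
  shows "(\<integral>\<^sup>+z. (c1 * a z + c2 * b z) * indicator S z \<partial>M)
       = c1 * (\<integral>\<^sup>+z. a z * indicator S z \<partial>M) + c2 * (\<integral>\<^sup>+z. b z * indicator S z \<partial>M)"
proof -
  have "(\<integral>\<^sup>+z. (c1 * a z + c2 * b z) * indicator S z \<partial>M)
      = (\<integral>\<^sup>+z. c1 * (a z * indicator S z) + c2 * (b z * indicator S z) \<partial>M)"
    by (simp add: distrib_right mult.assoc)
  also have "\<dots> = (\<integral>\<^sup>+z. c1 * (a z * indicator S z) \<partial>M) + (\<integral>\<^sup>+z. c2 * (b z * indicator S z) \<partial>M)"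
    by (rule nn_integral_add) measurable
  also have "\<dots> = c1 * (\<integral>\<^sup>+z. a z * indicator S z \<partial>M) + c2 * (\<integral>\<^sup>+z. b z * indicator S z \<partial>M)"
    by (simp add: nn_integral_cmult)
  finally show ?thesis .
qed

lemma W12_hardy:
  assumes W: "W12_0_disk h g"
  shows "(\<integral>\<^sup>+z\<in>ball 0 1. ennreal ((h z)\<^sup>2 * (1 / (1 - (cmod z)\<^sup>2)\<^sup>2)) \<partial>lebesgue)
         \<le> (\<integral>\<^sup>+z\<in>ball 0 1. ennreal ((cmod (g z))\<^sup>2) \<partial>lebesgue)"
proof -
  obtain \<phi> D where tf: "\<And>k. test_fun_disk (\<phi> k) (D k)"
    and E: "(\<lambda>k. \<integral>\<^sup>+x\<in>ball 0 1. ennreal ((\<phi> k x - h x)\<^sup>2) \<partial>lebesgue) \<longlonglongrightarrow> 0"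
    and F: "(\<lambda>k. \<integral>\<^sup>+x\<in>ball 0 1. ennreal ((norm (D k x - g x))\<^sup>2) \<partial>lebesgue) \<longlonglongrightarrow> 0"
    and hm[measurable]: "h \<in> borel_measurable lebesgue" and gm[measurable]: "g \<in> borel_measurable lebesgue"
    using W unfolding W12_0_disk_def by blast
  define W where "W z = 1 / (1 - (cmod z)\<^sup>2)\<^sup>2" for z :: complex
  have Wm[measurable]: "W \<in> borel_measurable lebesgue"
    unfolding W_def by (intro measurable_completion) measurable
  have \<phi>m[measurable]: "\<phi> k \<in> borel_measurable lebesgue" for k
  proof -
    obtain K where "continuous_on UNIV (\<phi> k)" using test_fun_facts[OF tf[of k]] by metis
    then show ?thesis by (intro measurable_completion) (simp add: borel_measurable_continuous_onI)
  qed
  have Dm[measurable]: "D k \<in> borel_measurable lebesgue" for k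
  proof -
    obtain K where "continuous_on UNIV (D k)" using test_fun_facts[OF tf[of k]] by metis
    then show ?thesis by (intro measurable_completion) (simp add: borel_measurable_continuous_onI)
  qed
  have ballm[measurable]: "ball 0 1 \<in> sets lebesgue"
    by (rule sets_completionI_sets) simp
  define G where "G = (\<integral>\<^sup>+z\<in>ball 0 1. ennreal ((cmod (g z))\<^sup>2) \<partial>lebesgue)"
  have trunc: "(\<integral>\<^sup>+z\<in>ball 0 1. ennreal ((h z)\<^sup>2 * min (W z) (real n)) \<partial>lebesgue) \<le> ennreal ((1 + e)\<^sup>2) * G"
    if e: "0 < e" for n e
  proof -
    define A where "A = (\<integral>\<^sup>+z\<in>ball 0 1. ennreal ((h z)\<^sup>2 * min (W z) (real n)) \<partial>lebesgue)"
    define Ek where "Ek k = (\<integral>\<^sup>+x\<in>ball 0 1. ennreal ((\<phi> k x - h x)\<^sup>2) \<partial>lebesgue)" for k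
    define Fk where "Fk k = (\<integral>\<^sup>+x\<in>ball 0 1. ennreal ((norm (D k x - g x))\<^sup>2) \<partial>lebesgue)" for k
    define c1 where "c1 = ennreal (1 + e)"
    define c2 where "c2 = ennreal (1 + 1 / e)"
    define c3 where "c3 = ennreal ((1 + 1 / e) * real n)"
    have bound: "A \<le> c1 * (c1 * G + c2 * Fk k) + c3 * Ek k" for k
    proof -
      have "A \<le> (\<integral>\<^sup>+z. (c1 * ennreal ((\<phi> k z)\<^sup>2 * W z) + c3 * ennreal ((\<phi> k z - h z)\<^sup>2)) * indicator (ball 0 1) z \<partial>lebesgue)"
        unfolding A_def
      proof (rule nn_integral_mono)
        fix z
        have W0: "0 \<le> W z" by (simp add: W_def)
        have m0: "0 \<le> min (W z) (real n)" by (intro min.boundedI W0 of_nat_0_le_iff)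
        have "(h z)\<^sup>2 * min (W z) (real n) \<le> ((1 + e) * (\<phi> k z)\<^sup>2 + (1 + 1 / e) * (h z - \<phi> k z)\<^sup>2) * min (W z) (real n)"
          using sq_split[OF e, of "\<phi> k z" "h z - \<phi> k z"] m0 by (intro mult_right_mono) auto
        also have "\<dots> = (1 + e) * ((\<phi> k z)\<^sup>2 * min (W z) (real n)) + (1 + 1 / e) * (h z - \<phi> k z)\<^sup>2 * min (W z) (real n)"
          by (simp add: algebra_simps)
        also have "\<dots> \<le> (1 + e) * ((\<phi> k z)\<^sup>2 * W z) + (1 + 1 / e) * (h z - \<phi> k z)\<^sup>2 * real n"
          using e by (intro add_mono mult_left_mono) auto
        finally have r: "(h z)\<^sup>2 * min (W z) (real n) \<le> (1 + e) * ((\<phi> k z)\<^sup>2 * W z) + (1 + 1 / e) * real n * (\<phi> k z - h z)\<^sup>2"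
          by (simp add: power2_commute mult.commute mult.left_commute)
        have "ennreal ((h z)\<^sup>2 * min (W z) (real n)) \<le> ennreal ((1 + e) * ((\<phi> k z)\<^sup>2 * W z) + (1 + 1 / e) * real n * (\<phi> k z - h z)\<^sup>2)"
          by (rule ennreal_leI[OF r])
        also have "\<dots> = c1 * ennreal ((\<phi> k z)\<^sup>2 * W z) + c3 * ennreal ((\<phi> k z - h z)\<^sup>2)"
        proof -
          have X: "0 \<le> (\<phi> k z)\<^sup>2 * W z" using W0 by simp
          have p1: "ennreal ((1 + e) * ((\<phi> k z)\<^sup>2 * W z)) = ennreal (1 + e) * ennreal ((\<phi> k z)\<^sup>2 * W z)"
            by (rule ennreal_mult) (use e X in auto)
          have p2: "ennreal ((1 + 1 / e) * real n * (\<phi> k z - h z)\<^sup>2) = ennreal ((1 + 1 / e) * real n) * ennreal ((\<phi> k z - h z)\<^sup>2)"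
            by (rule ennreal_mult) (use e in auto)
          have p3: "ennreal ((1 + e) * ((\<phi> k z)\<^sup>2 * W z) + (1 + 1 / e) * real n * (\<phi> k z - h z)\<^sup>2)
              = ennreal ((1 + e) * ((\<phi> k z)\<^sup>2 * W z)) + ennreal ((1 + 1 / e) * real n * (\<phi> k z - h z)\<^sup>2)"
            by (rule ennreal_plus) (use e X in auto)
          show ?thesis unfolding p3 p1 p2 c1_def c3_def ..
        qed
        finally show "ennreal ((h z)\<^sup>2 * min (W z) (real n)) * indicator (ball 0 1) z
            \<le> (c1 * ennreal ((\<phi> k z)\<^sup>2 * W z) + c3 * ennreal ((\<phi> k z - h z)\<^sup>2)) * indicator (ball 0 1) z"
          by (rule mult_right_mono) simp
      qed
      also have "\<dots> = c1 * (\<integral>\<^sup>+z\<in>ball 0 1. ennreal ((\<phi> k z)\<^sup>2 * W z) \<partial>lebesgue) + c3 * Ek k"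
        unfolding Ek_def by (rule nn_lin2) measurable
      also have "\<dots> \<le> c1 * (\<integral>\<^sup>+z\<in>ball 0 1. ennreal ((cmod (D k z))\<^sup>2) \<partial>lebesgue) + c3 * Ek k"
        using hardy_nn[OF tf[of k]] unfolding W_def by (intro add_mono mult_left_mono) auto
      finally have A1: "A \<le> c1 * (\<integral>\<^sup>+z\<in>ball 0 1. ennreal ((cmod (D k z))\<^sup>2) \<partial>lebesgue) + c3 * Ek k" .
      have ID: "(\<integral>\<^sup>+z\<in>ball 0 1. ennreal ((cmod (D k z))\<^sup>2) \<partial>lebesgue) \<le> c1 * G + c2 * Fk k"
      proof -
        have "(\<integral>\<^sup>+z\<in>ball 0 1. ennreal ((cmod (D k z))\<^sup>2) \<partial>lebesgue)
            \<le> (\<integral>\<^sup>+z. (c1 * ennreal ((cmod (g z))\<^sup>2) + c2 * ennreal ((norm (D k z - g z))\<^sup>2)) * indicator (ball 0 1) z \<partial>lebesgue)"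
        proof (rule nn_integral_mono)
          fix z
          have "(cmod (D k z))\<^sup>2 \<le> (cmod (g z) + cmod (D k z - g z))\<^sup>2"
            using norm_triangle_ineq[of "g z" "D k z - g z"] by (intro power_mono) auto
          also have "\<dots> \<le> (1 + e) * (cmod (g z))\<^sup>2 + (1 + 1 / e) * (cmod (D k z - g z))\<^sup>2"
            by (rule sq_split[OF e])
          finally have r: "(cmod (D k z))\<^sup>2 \<le> (1 + e) * (cmod (g z))\<^sup>2 + (1 + 1 / e) * (cmod (D k z - g z))\<^sup>2" .
          have "ennreal ((cmod (D k z))\<^sup>2) \<le> ennreal ((1 + e) * (cmod (g z))\<^sup>2 + (1 + 1 / e) * (cmod (D k z - g z))\<^sup>2)"
            by (rule ennreal_leI[OF r])
          also have "\<dots> = c1 * ennreal ((cmod (g z))\<^sup>2) + c2 * ennreal ((norm (D k z - g z))\<^sup>2)"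
          proof -
            have p1: "ennreal ((1 + e) * (cmod (g z))\<^sup>2) = ennreal (1 + e) * ennreal ((cmod (g z))\<^sup>2)"
              by (rule ennreal_mult) (use e in auto)
            have p2: "ennreal ((1 + 1 / e) * (cmod (D k z - g z))\<^sup>2) = ennreal (1 + 1 / e) * ennreal ((cmod (D k z - g z))\<^sup>2)"
              by (rule ennreal_mult) (use e in auto)
            have p3: "ennreal ((1 + e) * (cmod (g z))\<^sup>2 + (1 + 1 / e) * (cmod (D k z - g z))\<^sup>2)
                = ennreal ((1 + e) * (cmod (g z))\<^sup>2) + ennreal ((1 + 1 / e) * (cmod (D k z - g z))\<^sup>2)"
              by (rule ennreal_plus) (use e in auto)
            show ?thesis unfolding p3 p1 p2 c1_def c2_def ..
          qed
          finally show "ennreal ((cmod (D k z))\<^sup>2) * indicator (ball 0 1) z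
              \<le> (c1 * ennreal ((cmod (g z))\<^sup>2) + c2 * ennreal ((norm (D k z - g z))\<^sup>2)) * indicator (ball 0 1) z"
            by (rule mult_right_mono) simp
        qed
        also have "\<dots> = c1 * G + c2 * Fk k"
          unfolding G_def Fk_def by (rule nn_lin2) measurable
        finally show ?thesis .
      qed
      show ?thesis using A1 ID by (meson add_mono_thms_linordered_semiring(3) mult_left_mono order_trans zero_le)
    qed
    have lim: "(\<lambda>k. c1 * (c1 * G + c2 * Fk k) + c3 * Ek k) \<longlonglongrightarrow> c1 * (c1 * G + c2 * 0) + c3 * 0"
      unfolding c1_def c2_def c3_def Fk_def Ek_def
      by (intro tendsto_add tendsto_const ennreal_tendsto_cmult E F) auto
    have "A \<le> c1 * (c1 * G + c2 * 0) + c3 * 0"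
      by (rule LIMSEQ_le_const[OF lim]) (use bound in auto)
    also have "\<dots> = ennreal ((1 + e)\<^sup>2) * G"
      unfolding c1_def using e by (simp add: power2_eq_square ennreal_mult mult.assoc)
    finally show ?thesis unfolding A_def .
  qed
  have trunc2: "(\<integral>\<^sup>+z\<in>ball 0 1. ennreal ((h z)\<^sup>2 * min (W z) (real n)) \<partial>lebesgue) \<le> G" for n
  proof (cases "G = \<infinity>")
    case True then show ?thesis by simp
  next
    case False
    then have Gt: "G < top" by (simp add: top.not_eq_extremum)
    show ?thesis
    proof (rule tendsto_lowerbound)
      have "((\<lambda>e::real. G * ennreal ((1 + e)\<^sup>2)) \<longlongrightarrow> G * ennreal ((1 + 0)\<^sup>2)) (at_right 0)"
        by (intro ennreal_tendsto_cmult Gt tendsto_ennrealI tendsto_intros)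
      then show "((\<lambda>e::real. ennreal ((1 + e)\<^sup>2) * G) \<longlongrightarrow> G) (at_right 0)"
        by (simp add: mult.commute)
      show "\<forall>\<^sub>F e in at_right 0. (\<integral>\<^sup>+z\<in>ball 0 1. ennreal ((h z)\<^sup>2 * min (W z) (real n)) \<partial>lebesgue) \<le> ennreal ((1 + e)\<^sup>2) * G"
        unfolding eventually_at_right_field using trunc by (intro exI[of _ 1]) auto
    qed (simp add: trivial_limit_at_right_real)
  qed
  define f where "f n z = ennreal ((h z)\<^sup>2 * min (W z) (real n)) * indicator (ball 0 1) z" for n z
  have inc: "incseq f"
    unfolding f_def incseq_def le_fun_def
    by (auto intro!: mult_right_mono ennreal_leI mult_left_mono simp: min_def)
  have fm: "f n \<in> borel_measurable lebesgue" for n unfolding f_def by measurable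
  have "(\<integral>\<^sup>+z\<in>ball 0 1. ennreal ((h z)\<^sup>2 * W z) \<partial>lebesgue) \<le> (\<integral>\<^sup>+z. (SUP n. f n z) \<partial>lebesgue)"
  proof (rule nn_integral_mono)
    fix z
    obtain n where n: "W z \<le> real n" using real_arch_simple by blast
    have "ennreal ((h z)\<^sup>2 * W z) * indicator (ball 0 1) z = f n z"
      using n by (simp add: f_def min_def)
    also have "\<dots> \<le> (SUP n. f n z)" by (rule SUP_upper) simp
    finally show "ennreal ((h z)\<^sup>2 * W z) * indicator (ball 0 1) z \<le> (SUP n. f n z)" .
  qed
  also have "\<dots> = (SUP n. integral\<^sup>N lebesgue (f n))"
    by (rule nn_integral_monotone_convergence_SUP[OF inc fm])
  also have "\<dots> \<le> G"
  proof (rule SUP_least)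
    fix n
    have "integral\<^sup>N lebesgue (f n) = (\<integral>\<^sup>+z\<in>ball 0 1. ennreal ((h z)\<^sup>2 * min (W z) (real n)) \<partial>lebesgue)"
      by (rule nn_integral_cong) (simp add: f_def)
    then show "integral\<^sup>N lebesgue (f n) \<le> G" using trunc2[of n] by simp
  qed
  finally show ?thesis unfolding W_def G_def .
qed

theorem propositionC1:
  fixes \<zeta> :: "complex \<Rightarrow> complex" and h :: "complex \<Rightarrow> real" and g :: "complex \<Rightarrow> complex"
  assumes "\<zeta> holomorphic_on ball 0 1"
    and "W12_0_disk h g"
  shows "(\<integral>\<^sup>+x\<in>ball 0 1. ennreal ((h x)\<^sup>2 * (cmod (\<zeta> x))\<^sup>2) \<partial>lebesgue)
         \<le> 8 * (\<integral>\<^sup>+x\<in>ball 0 1. ennreal ((cmod (g x))\<^sup>2) \<partial>lebesgue)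
             * (\<integral>\<^sup>+x\<in>ball 0 1. ennreal ((cmod (\<zeta> x))\<^sup>2) \<partial>lebesgue)"
proof -
  define M where "M = (\<integral>\<^sup>+x\<in>ball 0 1. ennreal ((cmod (\<zeta> x))\<^sup>2) \<partial>lebesgue)"
  define G where "G = (\<integral>\<^sup>+x\<in>ball 0 1. ennreal ((cmod (g x))\<^sup>2) \<partial>lebesgue)"
  define W where "W z = 1 / (1 - (cmod z)\<^sup>2)\<^sup>2" for z :: complex
  have hm[measurable]: "h \<in> borel_measurable lebesgue" using assms(2) unfolding W12_0_disk_def by blast
  have Wm[measurable]: "W \<in> borel_measurable lebesgue"
    unfolding W_def by (intro measurable_completion) measurable
  have ballm[measurable]: "ball 0 1 \<in> sets lebesgue"
    by (rule sets_completionI_sets) simp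
  have "(\<integral>\<^sup>+x\<in>ball 0 1. ennreal ((h x)\<^sup>2 * (cmod (\<zeta> x))\<^sup>2) \<partial>lebesgue)
      \<le> (\<integral>\<^sup>+x. (8 * M) * (ennreal ((h x)\<^sup>2 * W x) * indicator (ball 0 1) x) \<partial>lebesgue)"
  proof (rule nn_integral_mono)
    fix x
    show "ennreal ((h x)\<^sup>2 * (cmod (\<zeta> x))\<^sup>2) * indicator (ball 0 1) x
        \<le> (8 * M) * (ennreal ((h x)\<^sup>2 * W x) * indicator (ball 0 1) x)"
    proof (cases "x \<in> ball 0 1")
      case True
      have W0: "0 \<le> W x" by (simp add: W_def)
      have "ennreal ((h x)\<^sup>2 * (cmod (\<zeta> x))\<^sup>2) = ennreal ((h x)\<^sup>2) * ennreal ((cmod (\<zeta> x))\<^sup>2)"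
        by (rule ennreal_mult) auto
      also have "\<dots> \<le> ennreal ((h x)\<^sup>2) * (8 * M * ennreal (W x))"
        using bergman[OF assms(1) True] unfolding M_def W_def by (rule mult_left_mono) simp
      also have "\<dots> = (8 * M) * ennreal ((h x)\<^sup>2 * W x)"
        using W0 by (simp add: ennreal_mult mult.commute mult.left_commute)
      finally show ?thesis using True by simp
    qed simp
  qed
  also have "\<dots> = (8 * M) * (\<integral>\<^sup>+x\<in>ball 0 1. ennreal ((h x)\<^sup>2 * W x) \<partial>lebesgue)"
    by (rule nn_integral_cmult) measurable
  also have "\<dots> \<le> (8 * M) * G"
    using W12_hardy[OF assms(2)] unfolding W_def G_def by (rule mult_left_mono) simp
  finally show ?thesis unfolding M_def G_def by (simp add: mult.commute mult.left_commute)
qed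


end
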